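(* Let $q\ge5$ be an integer coprime to $6$ and let $b$ be the inverse of $2$ modulo $q$. For any prime $p\mid q$, $$\sum_{d\ (\mathrm{mod}\ p)}\left(\frac{d(d+1)(d+2)(d+3)}{p}\right)=-(\Delta_p+1),$$ where $\Delta_p:=p+1-\#E_{3b^2}(\mathbb{F}_p)$.
   Context: $\left(\frac{\cdot}{p}\right)$ is the Legendre symbol. For $\lambda\in\mathbb{F}_p$, $E_\lambda/\mathbb{F}_p$ is the curve with Legendre model $y^2=x(x-1)(x-\lambda)$, and $\#E_\lambda(\mathbb{F}_p)$ counts its $\mathbb{F}_p$-rational points including the point at infinity. *)

theory Defs
  imports "HOL-Number_Theory.Number_Theory"
begin

text \<open>Number of F_p-rational points (including the point at infinity) of the
Legendre curve y^2 = x(x-1)(x-lambda) over F_p, where lambda is an integer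
representing an element of F_p = Z/pZ.\<close>
definition legendre_curve_card :: "int \<Rightarrow> int \<Rightarrow> nat" where
  "legendre_curve_card p lam =
     card {(x, y). x \<in> {0..<p} \<and> y \<in> {0..<p} \<and>
                   [y^2 = x * (x - 1) * (x - lam)] (mod p)} + 1"

end

theory Submission
  imports Defs
begin

lemma Leg_cong:
  assumes "[a = b] (mod p)" shows "Legendre a p = Legendre b p"
proof -
  have 1: "[a = 0] (mod p) \<longleftrightarrow> [b = 0] (mod p)"
    using assms cong_sym cong_trans by blast
  have 2: "QuadRes p a \<longleftrightarrow> QuadRes p b"
    unfolding QuadRes_def using assms cong_sym cong_trans by blast
  show ?thesis unfolding Legendre_def using 1 2 by simp
qed

lemma Leg_range: "Legendre a p \<in> {-1,0,1}"
  unfolding Legendre_def by auto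

lemma lt_dvd_zero:
  fixes p x :: int assumes "p dvd x" "\<bar>x\<bar> < p" shows "x = 0"
proof -
  obtain k where k: "x = p * k" using assms(1) by (auto elim: dvdE)
  have pk: "\<bar>p * k\<bar> < p" using k assms(2) by simp
  then have pp: "p > 0" by linarith
  have "\<bar>k\<bar> < 1"
  proof (rule ccontr)
    assume "\<not> \<bar>k\<bar> < 1"
    then have "p * 1 \<le> p * \<bar>k\<bar>" using pp by (intro mult_left_mono) auto
    then show False using pk pp by (simp add: abs_mult)
  qed
  then show ?thesis using k by simp
qed

lemma Leg_mult:
  fixes p :: int assumes "prime p" "2 < p"
  shows "Legendre (a*b) p = Legendre a p * Legendre b p"
proof -
  define P where "P = nat p"
  have P: "p = int P" using assms(2) unfolding P_def by simp
  have PP: "prime P" "2 < P" using assms P by auto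
  define k where "k = (P - 1) div 2"
  have E: "[Legendre c p = c ^ k] (mod p)" for c
    using euler_criterion[OF PP, of c] P k_def by simp
  have A: "[Legendre (a*b) p = a ^ k * b ^ k] (mod p)"
    using E[of "a*b"] by (simp add: power_mult_distrib)
  have B: "[Legendre a p * Legendre b p = a ^ k * b ^ k] (mod p)"
    using E[of a] E[of b] by (rule cong_mult)
  have "[Legendre (a*b) p = Legendre a p * Legendre b p] (mod p)"
    using cong_trans[OF A cong_sym[OF B]] .
  then have d: "p dvd Legendre (a*b) p - Legendre a p * Legendre b p"
    by (simp add: cong_iff_dvd_diff)
  have r: "Legendre (a*b) p - Legendre a p * Legendre b p \<in> {-2,-1,0,1,2}"
    using Leg_range[of "a*b" p] Leg_range[of a p] Leg_range[of b p] by auto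
  have "\<bar>Legendre (a*b) p - Legendre a p * Legendre b p\<bar> < p" using r assms(2) by auto
  then have "Legendre (a*b) p - Legendre a p * Legendre b p = 0" using d lt_dvd_zero by blast
  then show ?thesis by simp
qed

lemma Leg_sq:
  fixes p :: int assumes "prime p" "\<not> [c = 0] (mod p)"
  shows "Legendre (c^2) p = 1"
proof -
  have "\<not> [c^2 = 0] (mod p)"
    using assms by (simp add: cong_0_iff prime_dvd_power_iff)
  moreover have "QuadRes p (c^2)" unfolding QuadRes_def using cong_refl by blast
  ultimately show ?thesis unfolding Legendre_def by simp
qed

lemma Leg_sq_mult:
  fixes p :: int assumes "prime p" "2 < p" "\<not> [c = 0] (mod p)"
  shows "Legendre (c^2 * a) p = Legendre a p"
  using Leg_mult[OF assms(1,2)] Leg_sq[OF assms(1,3)] by simp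

lemma count_roots:
  fixes p :: int assumes "prime p" "2 < p"
  shows "int (card {y \<in> {0..<p}. [y^2 = a] (mod p)}) = 1 + Legendre a p"
proof (cases "[a = 0] (mod p)")
  case True
  have eq: "{y \<in> {0..<p}. [y^2 = a] (mod p)} = {0}"
  proof safe
    fix y assume y: "y \<in> {0..<p}" "[y^2 = a] (mod p)"
    then have "p dvd y^2" using True cong_trans cong_0_iff by blast
    then have "p dvd y" using assms(1) prime_dvd_power by blast
    with y show "y = 0" using zdvd_imp_le by fastforce
  next
    show "0 \<in> {0..<p}" using assms by simp
    show "[0^2 = a] (mod p)" using True by (simp add: cong_sym)
  qed
  show ?thesis unfolding eq using True by (simp add: Legendre_def)
next
  case False
  show ?thesis
  proof (cases "QuadRes p a")
    case nq: False
    have eq: "{y \<in> {0..<p}. [y^2 = a] (mod p)} = {}" using nq unfolding QuadRes_def by auto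
    show ?thesis unfolding eq using False nq by (simp add: Legendre_def)
  next
    case True
    then obtain y0 where y0: "[y0^2 = a] (mod p)" unfolding QuadRes_def by auto
    define r where "r = y0 mod p"
    have "[r = y0] (mod p)" unfolding r_def by simp
    then have "[r^2 = y0^2] (mod p)" by (rule cong_pow)
    then have r: "[r^2 = a] (mod p)" using y0 by (rule cong_trans)
    have rr: "0 \<le> r" "r < p" using assms unfolding r_def by auto
    have r0: "r \<noteq> 0" using r False by (auto simp: cong_sym_eq)
    have eq: "{y \<in> {0..<p}. [y^2 = a] (mod p)} = {r, p - r}"
    proof safe
      fix y assume y: "y \<in> {0..<p}" "[y^2 = a] (mod p)"
      then have "[y^2 = r^2] (mod p)" using r cong_sym cong_trans by blast
      then have "p dvd (y - r) * (y + r)" by (simp add: cong_iff_dvd_diff power2_eq_square algebra_simps)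
      then have "p dvd (y - r) \<or> p dvd (y + r)" using assms(1) prime_dvd_mult_iff by blast
      moreover assume "y \<noteq> r"
      ultimately show "y = p - r"
      proof (elim disjE)
        assume "p dvd y - r" "y \<noteq> r"
        then obtain k where k: "y - r = p * k" by (auto elim: dvdE)
        have pk: "\<bar>p * k\<bar> < p" using k y rr by auto
        have "\<bar>k\<bar> < 1"
        proof (rule ccontr)
          assume "\<not> \<bar>k\<bar> < 1"
          then have "p * 1 \<le> p * \<bar>k\<bar>" using assms(2) by (intro mult_left_mono) auto
          then show False using pk assms(2) by (simp add: abs_mult)
        qed
        then have "k = 0" by simp
        then show ?thesis using k \<open>y \<noteq> r\<close> by simp
      next
        assume "p dvd y + r"
        then obtain k where k: "y + r = p * k" by (auto elim: dvdE)
        have "0 < p * k" using k y rr r0 by auto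
        then have k1: "0 < k" using assms(2) by (simp add: zero_less_mult_iff)
        have "p * k < p * 2" using k y rr by (simp add: k[symmetric])
        then have "k < 2" using assms(2) by simp
        with k1 have "k = 1" by simp
        then show ?thesis using k by simp
      qed
    next
      show "r \<in> {0..<p}" using rr by simp
      show "[r^2 = a] (mod p)" by (rule r)
      show "p - r \<in> {0..<p}" using rr r0 by simp
      have "[(p - r)^2 = r^2] (mod p)"
        by (simp add: cong_iff_dvd_diff power2_eq_square algebra_simps)
      then show "[(p - r)^2 = a] (mod p)" using r cong_trans by blast
    qed
    have "r \<noteq> p - r"
    proof
      assume "r = p - r" then have "p = 2 * r" by simp
      then have "2 dvd p" by simp
      moreover have "\<forall>m. m \<ge> 0 \<and> m dvd p \<longrightarrow> m = 1 \<or> m = p" using assms(1) by (simp add: prime_int_iff)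
      moreover have "(0::int) \<le> 2" by simp
      ultimately have "(2::int) = 1 \<or> 2 = p" by blast
      then show False using assms(2) by simp
    qed
    then show ?thesis unfolding eq using False True by (simp add: Legendre_def)
  qed
qed


lemma sum_perm:
  assumes "finite A" "inj_on f A" "f ` A \<subseteq> A"
  shows "sum F A = (\<Sum>x\<in>A. F (f x))"
proof -
  have "f ` A = A" using endo_inj_surj assms by blast
  then have "sum F A = sum F (f ` A)" by simp
  also have "\<dots> = (\<Sum>x\<in>A. F (f x))" using assms(2) by (simp add: sum.reindex)
  finally show ?thesis .
qed

theorem lemma6p5:
  fixes q b p :: int
  assumes "q \<ge> 5" and "coprime q 6"
    and "[2 * b = 1] (mod q)"
    and "prime p" and "p dvd q"
  shows "(\<Sum>d\<in>{0..<p}. Legendre (d * (d + 1) * (d + 2) * (d + 3)) p)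
         = - ((p + 1 - int (legendre_curve_card p (3 * b^2))) + 1)"
proof -
  have pp: "prime p" by fact
  have p1: "p > 1" using pp prime_gt_1_int by blast
  have n6: "\<not> p dvd 6"
  proof
    assume "p dvd 6"
    then have "\<bar>p\<bar> = 1" using coprime_common_divisor_int[OF assms(2) assms(5)] by blast
    with p1 show False by simp
  qed
  have n2: "\<not> p dvd 2" proof
    assume "p dvd 2" moreover have "(2::int) dvd 6" by simp
    ultimately show False using n6 dvd_trans by blast
  qed
  have n3: "\<not> p dvd 3" proof
    assume "p dvd 3" moreover have "(3::int) dvd 6" by simp
    ultimately show False using n6 dvd_trans by blast
  qed
  have p2: "p > 2" using p1 n2 by (cases "p = 2") auto
  have hb: "[2 * b = 1] (mod p)" using assms(3,5) cong_dvd_modulus by blast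
  have hbd: "p dvd 2 * b - 1" using hb by (simp add: cong_iff_dvd_diff)
  have b0: "\<not> [b = 0] (mod p)"
  proof
    assume "[b = 0] (mod p)"
    then have "p dvd 2 * b" by (simp add: cong_0_iff)
    then have "p dvd 2 * b - (2 * b - 1)" using hbd by (rule dvd_diff)
    then have "p dvd 1" by simp
    with p1 show False by (simp add: zdvd_imp_le) 
  qed
  define chi where "chi a = Legendre a p" for a
  define g where "g d = d * (d + 1) * (d + 2) * (d + 3)" for d :: int
  define h where "h x = (1 + x) * (1 + 2 * x) * (1 + 3 * x)" for x :: int
  define f where "f w = w * (w - 1) * (w - 3 * b^2)" for w :: int
  define iv where "iv d = (SOME x. [d * x = 1] (mod p)) mod p" for d :: int
  have inv1: "[d * iv d = 1] (mod p)" if "d \<in> {1..<p}" for d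
  proof -
    have "\<not> p dvd d" using that zdvd_imp_le by fastforce
    then have "coprime p d" using prime_imp_coprime pp by blast
    then have "\<exists>x. [d * x = 1] (mod p)" using cong_solve_coprime_int by (simp add: coprime_commute)
    then have "[d * (SOME x. [d * x = 1] (mod p)) = 1] (mod p)" by (rule someI_ex)
    moreover have "[d * ((SOME x. [d * x = 1] (mod p)) mod p) = d * (SOME x. [d * x = 1] (mod p))] (mod p)"
      by (intro cong_mult cong_refl) simp
    ultimately show ?thesis unfolding iv_def using cong_trans by blast
  qed
  have invr: "iv d \<in> {1..<p}" if "d \<in> {1..<p}" for d
  proof -
    have "0 \<le> iv d" "iv d < p" unfolding iv_def using p1 by auto
    moreover have "iv d \<noteq> 0" using inv1[OF that] p1 by (auto simp: cong_def)
    ultimately show ?thesis by simp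
  qed
  have invinj: "inj_on iv {1..<p}"
  proof
    fix x y assume x: "x \<in> {1..<p}" and y: "y \<in> {1..<p}" and e: "iv x = iv y"
    have a1: "[x * (y * iv y) = x * 1] (mod p)" using inv1[OF y] by (intro cong_mult cong_refl)
    have a2: "[y * (x * iv x) = y * 1] (mod p)" using inv1[OF x] by (intro cong_mult cong_refl)
    have "x * (y * iv y) = y * (x * iv x)" using e by simp
    then have "[x = y] (mod p)" using a1 a2 cong_sym cong_trans by (metis mult_1_right)
    then have "p dvd x - y" by (simp add: cong_iff_dvd_diff)
    moreover have "\<bar>x - y\<bar> < p" using x y by auto
    ultimately show "x = y" using lt_dvd_zero by fastforce
  qed
  have step1: "chi (g d) = chi (h (iv d))" if "d \<in> {1..<p}" for d
  proof -
    let ?x = "iv d"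
    have c: "[?x * d = 1] (mod p)" using inv1[OF that] by (simp add: mult.commute)
    have ck: "[?x * (d + k) = 1 + k * ?x] (mod p)" for k
      using cong_add[OF c cong_refl[of "k * ?x"]] by (simp add: algebra_simps)
    have C: "[(?x * d) * (?x * (d + 1)) * (?x * (d + 2)) * (?x * (d + 3)) = 1 * (1 + 1 * ?x) * (1 + 2 * ?x) * (1 + 3 * ?x)] (mod p)"
      by (intro cong_mult c ck)
    have E1: "(?x * d) * (?x * (d + 1)) * (?x * (d + 2)) * (?x * (d + 3)) = (?x^2)^2 * g d"
      unfolding g_def power2_eq_square by (simp only: mult_ac)
    have E2: "1 * (1 + 1 * ?x) * (1 + 2 * ?x) * (1 + 3 * ?x) = h ?x" unfolding h_def by simp
    have X: "[(?x^2)^2 * g d = h ?x] (mod p)" using C unfolding E1 E2 .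
    have "chi (h ?x) = chi ((?x^2)^2 * g d)" unfolding chi_def by (rule Leg_cong[OF cong_sym[OF X]])
    also have "\<dots> = chi (g d)" unfolding chi_def
    proof (rule Leg_sq_mult[OF pp p2])
      have "\<not> p dvd ?x" using invr[OF that] zdvd_imp_le by fastforce
      then have "\<not> p dvd ?x^2" using pp prime_dvd_power by blast
      then show "\<not> [?x^2 = 0] (mod p)" by (simp add: cong_0_iff)
    qed
    finally show ?thesis by simp
  qed
  have S1: "(\<Sum>d\<in>{1..<p}. chi (g d)) = (\<Sum>x\<in>{1..<p}. chi (h x))"
  proof -
    have "(\<Sum>d\<in>{1..<p}. chi (g d)) = (\<Sum>d\<in>{1..<p}. chi (h (iv d)))" using step1 by simp
    also have "\<dots> = (\<Sum>x\<in>{1..<p}. chi (h x))"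
    proof -
      have "iv ` {1..<p} \<subseteq> {1..<p}" using invr by blast
      from sum_perm[OF finite_atLeastLessThan_int invinj this, of "\<lambda>x. chi (h x)"] show ?thesis by simp
    qed
    finally show ?thesis .
  qed
  define ph where "ph x = (3 * b * (x + 1)) mod p" for x
  have phir: "ph x \<in> {0..<p}" for x unfolding ph_def using p1 by auto
  have phiinj: "inj_on ph {0..<p}"
  proof
    fix x y assume x: "x \<in> {0..<p}" and y: "y \<in> {0..<p}" and e: "ph x = ph y"
    then have "p dvd 3 * b * (x + 1) - 3 * b * (y + 1)" unfolding ph_def
      by (simp add: mod_eq_dvd_iff)
    moreover have "3 * b * (x + 1) - 3 * b * (y + 1) = (3 * b) * (x - y)" by (simp add: algebra_simps)
    ultimately have "p dvd (3 * b) * (x - y)" by simp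
    moreover have "\<not> p dvd 3 * b" using n3 b0 pp by (simp add: prime_dvd_mult_iff cong_0_iff)
    ultimately have "p dvd x - y" using pp prime_dvd_mult_iff by blast
    moreover have "\<bar>x - y\<bar> < p" using x y by auto
    ultimately show "x = y" using lt_dvd_zero by fastforce
  qed
  have step2: "chi (f (ph x)) = chi (h x)" for x
  proof -
    let ?w = "ph x"
    have c1: "[?w = 3 * b * (x + 1)] (mod p)" unfolding ph_def by simp
    have c2: "[?w - 1 = b * (3 * x + 1)] (mod p)"
    proof -
      have "[?w - 1 = 3 * b * (x + 1) - 1] (mod p)" using c1 by (simp add: cong_diff)
      moreover have "[3 * b * (x + 1) - 1 = b * (3 * x + 1)] (mod p)"
        unfolding cong_iff_dvd_diff using hbd by (simp add: algebra_simps)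
      ultimately show ?thesis by (rule cong_trans)
    qed
    have c3: "[?w - 3 * b^2 = 3 * b^2 * (2 * x + 1)] (mod p)"
    proof -
      have "[?w - 3 * b^2 = 3 * b * (x + 1) - 3 * b^2] (mod p)" using c1 by (simp add: cong_diff)
      moreover have "[3 * b * (x + 1) - 3 * b^2 = 3 * b^2 * (2 * x + 1)] (mod p)"
      proof -
        have "3 * b * (x + 1) - 3 * b^2 - 3 * b^2 * (2 * x + 1) = (2 * b - 1) * (- 3 * b * (x + 1))"
          by (simp add: algebra_simps power2_eq_square)
        then show ?thesis unfolding cong_iff_dvd_diff using hbd by simp
      qed
      ultimately show ?thesis by (rule cong_trans)
    qed
    have "[f ?w = (3 * b * (x + 1)) * (b * (3 * x + 1)) * (3 * b^2 * (2 * x + 1))] (mod p)"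
      unfolding f_def using c1 c2 c3 by (intro cong_mult)
    moreover have "(3 * b * (x + 1)) * (b * (3 * x + 1)) * (3 * b^2 * (2 * x + 1)) = (3 * b^2)^2 * h x"
      unfolding h_def by (simp add: algebra_simps power2_eq_square)
    ultimately have "[f ?w = (3 * b^2)^2 * h x] (mod p)" by simp
    then have "chi (f ?w) = chi ((3 * b^2)^2 * h x)" unfolding chi_def by (rule Leg_cong)
    also have "\<dots> = chi (h x)" unfolding chi_def
    proof (rule Leg_sq_mult[OF pp p2])
      have "\<not> p dvd b^2" using b0 pp prime_dvd_power cong_0_iff by blast
      then have "\<not> p dvd 3 * b^2" using n3 pp by (simp add: prime_dvd_mult_iff)
      then show "\<not> [3 * b^2 = 0] (mod p)" by (simp add: cong_0_iff)
    qed
    finally show ?thesis .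
  qed
  have S2: "(\<Sum>x\<in>{0..<p}. chi (h x)) = (\<Sum>w\<in>{0..<p}. chi (f w))"
  proof -
    have "ph ` {0..<p} \<subseteq> {0..<p}" using phir by blast
    from sum_perm[OF finite_atLeastLessThan_int phiinj this, of "\<lambda>w. chi (f w)"] show ?thesis using step2 by simp
  qed
  have split: "{0..<p} = insert 0 {1..<p}" using p1 by auto
  have L1: "chi 1 = 1" unfolding chi_def Legendre_def QuadRes_def
    using p1 by (auto simp: cong_def intro: exI[of _ 1])
  have LHS: "(\<Sum>d\<in>{0..<p}. Legendre (d * (d + 1) * (d + 2) * (d + 3)) p) = (\<Sum>w\<in>{0..<p}. chi (f w)) - 1"
  proof -
    have "(\<Sum>d\<in>{0..<p}. Legendre (d * (d + 1) * (d + 2) * (d + 3)) p) = (\<Sum>d\<in>{0..<p}. chi (g d))"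
      unfolding chi_def g_def by simp
    also have "\<dots> = chi (g 0) + (\<Sum>d\<in>{1..<p}. chi (g d))" unfolding split by simp
    also have "chi (g 0) = 0" unfolding chi_def g_def Legendre_def by simp
    also have "(\<Sum>x\<in>{0..<p}. chi (h x)) = chi (h 0) + (\<Sum>x\<in>{1..<p}. chi (h x))" unfolding split by simp
    then have "(\<Sum>x\<in>{1..<p}. chi (h x)) = (\<Sum>x\<in>{0..<p}. chi (h x)) - 1" using L1 unfolding h_def by simp
    ultimately show ?thesis using S1 S2 by simp
  qed
  have card: "int (legendre_curve_card p (3 * b^2)) = p + (\<Sum>w\<in>{0..<p}. chi (f w)) + 1"
  proof -
    have "{(x, y). x \<in> {0..<p} \<and> y \<in> {0..<p} \<and> [y^2 = x * (x - 1) * (x - 3 * b^2)] (mod p)}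
        = Sigma {0..<p} (\<lambda>x. {y \<in> {0..<p}. [y^2 = f x] (mod p)})" (is "_ = ?S") unfolding f_def by auto
    moreover have fin: "\<forall>x\<in>{0..<p}. finite {y \<in> {0..<p}. [y^2 = f x] (mod p)}" by (intro ballI finite_subset[OF _ finite_atLeastLessThan_int[of 0 p]]) auto
    ultimately have "legendre_curve_card p (3 * b^2) = card ?S + 1"
      unfolding legendre_curve_card_def by simp
    also have "card ?S = (\<Sum>x\<in>{0..<p}. card {y \<in> {0..<p}. [y^2 = f x] (mod p)})"
      by (rule card_SigmaI[OF finite_atLeastLessThan_int fin])
    finally have "legendre_curve_card p (3 * b^2) = (\<Sum>x\<in>{0..<p}. card {y \<in> {0..<p}. [y^2 = f x] (mod p)}) + 1" .
    then have "int (legendre_curve_card p (3 * b^2)) = (\<Sum>x\<in>{0..<p}. int (card {y \<in> {0..<p}. [y^2 = f x] (mod p)})) + 1"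
      by simp
    also have "\<dots> = (\<Sum>x\<in>{0..<p}. 1 + chi (f x)) + 1"
      using count_roots[OF pp p2] unfolding chi_def by simp
    also have "\<dots> = p + (\<Sum>w\<in>{0..<p}. chi (f w)) + 1" using p1 by (simp add: sum.distrib)
    finally show ?thesis .
  qed
  show ?thesis using LHS card by simp
qed

end
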